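(* For every $y\in[0,1]$, $$\frac12\le\dim_H R^{-1}(y)\le\log_2\varphi,$$ where $\varphi=(1+\sqrt5)/2$.
   Context: Define $\rho$ on binary words: for $b=b_1b_2\dots$, $\rho(b)$ is obtained by deleting every digit $b_n=0$ and replacing every $b_n=1$ by $0$ if $n$ is odd and by $1$ if $n$ is even. For $x\in(0,1]$ let $\beta(x)$ be the unique binary expansion of $x$ with infinitely many $1$'s. Define $R:[0,1]\to[0,1]$ by $R(0)=2/3$ and, for $x\in(0,1]$, $R(x)=\sum_{n\ge1}c_n2^{-n}$ where $c=\rho(\beta(x))$. $\dim_H$ denotes Hausdorff dimension. *)

theory Defs
  imports "HOL-Analysis.Analysis" "HOL-Library.Extended_Real"
begin

text \<open>beta x: the binary expansion x = sum_{n>=1} b_n 2^(-n) with infinitely many 1's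
  (digits indexed from 1; the entry at index 0 is fixed to 0 and unused).\<close>
definition beta :: "real \<Rightarrow> nat \<Rightarrow> nat" where
  "beta x = (SOME b. b 0 = 0 \<and> (\<forall>n. b n \<in> {0, 1}) \<and> infinite {n. b n = 1} \<and>
                     (\<lambda>n. real (b (Suc n)) / 2 ^ Suc n) sums x)"

text \<open>rho on infinite binary words with infinitely many 1's: the k-th digit (k>=1) of rho b
  is 1 iff the k-th occurrence of the digit 1 in b is at an even position.\<close>
definition rho :: "(nat \<Rightarrow> nat) \<Rightarrow> nat \<Rightarrow> nat" where
  "rho b k = (if k = 0 then 0
              else if even (enumerate {n. 1 \<le> n \<and> b n = 1} (k - 1)) then 1 else 0)"

definition R :: "real \<Rightarrow> real" where
  "R x = (if x = 0 then 2/3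
          else (\<Sum>k. real (rho (beta x) (Suc k)) / 2 ^ Suc k))"

definition hausdorff_pre :: "real \<Rightarrow> real \<Rightarrow> real set \<Rightarrow> ennreal" where
  "hausdorff_pre s \<delta> A =
     (INF U \<in> {U :: nat \<Rightarrow> real set. A \<subseteq> (\<Union>i. U i) \<and> (\<forall>i. bounded (U i) \<and> diameter (U i) \<le> \<delta>)}.
        \<Sum>i. ennreal (diameter (U i) powr s))"

definition hausdorff_measure :: "real \<Rightarrow> real set \<Rightarrow> ennreal" where
  "hausdorff_measure s A = (SUP \<delta> \<in> {0<..}. hausdorff_pre s \<delta> A)"

definition hausdorff_dim :: "real set \<Rightarrow> ereal" where
  "hausdorff_dim A = Inf {ereal s | s. 0 \<le> s \<and> hausdorff_measure s A = 0}"

end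

theory Submission
  imports Defs
begin


definition bin01 :: "(nat \<Rightarrow> nat) \<Rightarrow> bool" where
  "bin01 d \<longleftrightarrow> (\<forall>n. d n \<in> {0,1})"

definition dterm :: "(nat \<Rightarrow> nat) \<Rightarrow> nat \<Rightarrow> real" where
  "dterm d n = real (d (Suc n)) / 2 ^ Suc n"

definition dtail :: "(nat \<Rightarrow> nat) \<Rightarrow> nat \<Rightarrow> real" where
  "dtail d m = (\<Sum>n. dterm d (n + m))"

definition geo :: "nat \<Rightarrow> nat \<Rightarrow> real" where
  "geo m n = (1/2) ^ Suc (n + m)"

lemma bin01_le1: "bin01 d \<Longrightarrow> real (d n) \<le> 1"
  unfolding bin01_def by (cases "d n = 0") (auto dest: spec[of _ n])

lemma dterm_nonneg: "0 \<le> dterm d n"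
  by (simp add: dterm_def)

lemma dterm_le: "bin01 d \<Longrightarrow> dterm d n \<le> 1 / 2 ^ Suc n"
  unfolding dterm_def using bin01_le1[of d "Suc n"]
  by (simp add: divide_le_cancel)

lemma dterm_le_geo: "bin01 d \<Longrightarrow> dterm d (n + m) \<le> geo m n"
  using dterm_le[of d "n+m"] by (simp add: geo_def power_one_over)

lemma geo_eq: "geo m = (\<lambda>n. (1/2::real) ^ n * (1/2) ^ Suc m)"
  by (rule ext) (simp add: geo_def power_add)

lemma summable_geo: "summable (geo m)"
proof -
  define q where "q = (1/2::real) ^ Suc m"
  have "summable (\<lambda>n::nat. (1/2::real) ^ n * q)"
    by (intro summable_mult2 summable_geometric) simp
  then show ?thesis by (simp add: geo_eq q_def)
qed

lemma geo_sum: "suminf (geo m) = (1/2) ^ m"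
proof -
  define q where "q = (1/2::real) ^ Suc m"
  have "(\<Sum>n. (1/2::real) ^ n * q) = (\<Sum>n. (1/2::real) ^ n) * q"
    by (rule suminf_mult2[symmetric]) (rule summable_geometric, simp)
  also have "\<dots> = 2 * q" by (simp add: suminf_geometric)
  finally show ?thesis by (simp add: geo_eq q_def[symmetric]) (simp add: q_def)
qed

lemma summable_dterm_shift: "bin01 d \<Longrightarrow> summable (\<lambda>n. dterm d (n + m))"
  by (rule summable_comparison_test[OF _ summable_geo[of m]])
     (auto intro!: exI[of _ 0] simp: dterm_nonneg dterm_le_geo)

lemma summable_dterm: "bin01 d \<Longrightarrow> summable (dterm d)"
  using summable_dterm_shift[of d 0] by simp

lemma dtail_nonneg: "bin01 d \<Longrightarrow> 0 \<le> dtail d m"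
  unfolding dtail_def by (intro suminf_nonneg summable_dterm_shift) (auto simp: dterm_nonneg)

lemma dtail_le: "bin01 d \<Longrightarrow> dtail d m \<le> (1/2) ^ m"
proof -
  assume b: "bin01 d"
  have "dtail d m \<le> suminf (geo m)"
    unfolding dtail_def
    by (intro suminf_le summable_dterm_shift b summable_geo) (use dterm_le_geo[OF b] in auto)
  then show ?thesis by (simp add: geo_sum)
qed

lemma dval_split: "bin01 d \<Longrightarrow> suminf (dterm d) = sum (dterm d) {..<m} + dtail d m"
  unfolding dtail_def using suminf_split_initial_segment[OF summable_dterm, of d m] by simp

lemma dtail_Suc: "bin01 d \<Longrightarrow> dtail d m = dterm d m + dtail d (Suc m)"
proof -
  assume b: "bin01 d"
  have "(\<Sum>n. dterm d (Suc n + m)) = (\<Sum>n. dterm d (n + m)) - dterm d (0 + m)"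
    using suminf_split_head[OF summable_dterm_shift[OF b, of m]] by simp
  then show ?thesis unfolding dtail_def by simp
qed

lemma dtail_zero: "bin01 d \<Longrightarrow> dtail d m = 0 \<Longrightarrow> n > m \<Longrightarrow> d n = 0"
proof -
  assume b: "bin01 d" and z: "dtail d m = 0" and nm: "n > m"
  have "\<forall>k. dterm d (k + m) = 0"
    using suminf_eq_zero_iff[OF summable_dterm_shift[OF b, of m]] z dterm_nonneg
    unfolding dtail_def by auto
  from this[rule_format, of "n - Suc m"] nm show "d n = 0"
    by (simp add: dterm_def Suc_diff_Suc)
qed

lemma dtail_full: "bin01 d \<Longrightarrow> dtail d m = (1/2)^m \<Longrightarrow> n > m \<Longrightarrow> d n = 1"
proof -
  assume b: "bin01 d" and z: "dtail d m = (1/2)^m" and nm: "n > m"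
  let ?g = "\<lambda>k. geo m k - dterm d (k + m)"
  have sg: "summable ?g" by (intro summable_diff summable_geo summable_dterm_shift b)
  have "suminf ?g = suminf (geo m) - dtail d m"
    unfolding dtail_def by (rule suminf_diff[symmetric]) (intro summable_geo summable_dterm_shift b)+
  then have "suminf ?g = 0" using z by (simp add: geo_sum)
  moreover have "\<forall>k. 0 \<le> ?g k" using dterm_le_geo[OF b] by simp
  ultimately have "\<forall>k. ?g k = 0" using suminf_eq_zero_iff[OF sg] by auto
  from this[rule_format, of "n - Suc m"] nm have "real (d n) / 2 ^ n = (1/2)^n"
    by (simp add: dterm_def geo_def Suc_diff_Suc power_one_over)
  then have "real (d n) = 1" by (simp add: power_one_over field_simps)
  then show "d n = 1" by simp
qed


definition betaP :: "(nat \<Rightarrow> nat) \<Rightarrow> real \<Rightarrow> bool" where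
  "betaP b x \<longleftrightarrow> b 0 = 0 \<and> (\<forall>n. b n \<in> {0, 1}) \<and> infinite {n. b n = 1} \<and>
                     (\<lambda>n. real (b (Suc n)) / 2 ^ Suc n) sums x"

lemma dterm_fun: "(\<lambda>n. real (b (Suc n)) / 2 ^ Suc n) = dterm b"
  by (rule ext) (simp add: dterm_def)

lemma betaP_alt: "betaP b x \<longleftrightarrow> b 0 = 0 \<and> bin01 b \<and> infinite {n. b n = 1} \<and> suminf (dterm b) = x"
  unfolding betaP_def dterm_fun bin01_def
  using summable_dterm[of b] unfolding bin01_def by (auto simp: sums_iff)

lemma first_diff:
  assumes b: "bin01 d" "bin01 d'" and eq: "\<forall>n\<le>k. d n = d' n"
    and dk: "d (Suc k) = 1" "d' (Suc k) = 0" and v: "suminf (dterm d) = suminf (dterm d')"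
  shows "(\<forall>n > Suc k. d n = 0) \<and> (\<forall>n > Suc k. d' n = 1)"
proof -
  have s: "sum (dterm d) {..<k} = sum (dterm d') {..<k}"
    by (rule sum.cong) (auto simp: dterm_def eq)
  have "sum (dterm d) {..<k} + (dterm d k + dtail d (Suc k)) =
        sum (dterm d') {..<k} + (dterm d' k + dtail d' (Suc k))"
    using v dval_split[OF b(1), of k] dval_split[OF b(2), of k] dtail_Suc[OF b(1), of k]
      dtail_Suc[OF b(2), of k] by simp
  then have e: "(1/2)^Suc k + dtail d (Suc k) = dtail d' (Suc k)"
    using s dk by (simp add: dterm_def power_one_over)
  have t0: "dtail d (Suc k) = 0" using e dtail_nonneg[OF b(1), of "Suc k"] dtail_le[OF b(2), of "Suc k"] by linarith
  have t1: "dtail d' (Suc k) = (1/2)^Suc k" using e t0 by simp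
  show ?thesis using dtail_zero[OF b(1) t0] dtail_full[OF b(2) t1] by blast
qed

lemma exists_first_diff:
  assumes "d \<noteq> d'" "d 0 = d' 0"
  shows "\<exists>k. (\<forall>n\<le>k. d n = d' n) \<and> d (Suc k) \<noteq> d' (Suc k)"
proof -
  obtain m where m: "d m \<noteq> d' m" using assms by auto
  define j where "j = (LEAST m. d m \<noteq> d' m)"
  have j1: "d j \<noteq> d' j" unfolding j_def by (rule LeastI[of _ m]) (rule m)
  have j2: "\<forall>n<j. d n = d' n" unfolding j_def using not_less_Least by blast
  have "j \<noteq> 0" using j1 assms by auto
  then obtain k where "j = Suc k" by (cases j) auto
  then show ?thesis using j1 j2 by (intro exI[of _ k]) auto
qed

lemma bin01_cases: "bin01 d \<Longrightarrow> d n = 0 \<or> d n = 1"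
  unfolding bin01_def by auto

lemma two_expansions:
  assumes b: "bin01 d" "bin01 d'" "d 0 = 0" "d' 0 = 0" and ne: "d \<noteq> d'"
    and v: "suminf (dterm d) = suminf (dterm d')"
  shows "\<exists>k. (finite {n. d n = 1} \<and> infinite {n. d' n = 1}) \<or> (infinite {n. d n = 1} \<and> finite {n. d' n = 1})"
proof -
  obtain k where k: "\<forall>n\<le>k. d n = d' n" "d (Suc k) \<noteq> d' (Suc k)"
    using exists_first_diff[OF ne] b by auto
  have fin: "finite {n. e n = 1}" if "\<forall>n > Suc k. e n = 0" for e :: "nat \<Rightarrow> nat"
  proof -
    have "{n. e n = 1} \<subseteq> {..Suc k}" using that by (auto simp: not_le[symmetric])
    then show ?thesis using finite_subset by blast
  qed
  have inf: "infinite {n. e n = 1}" if "\<forall>n > Suc k. e n = 1" for e :: "nat \<Rightarrow> nat"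
  proof
    assume "finite {n. e n = 1}"
    then obtain M where "\<forall>n\<in>{n. e n = 1}. n \<le> M" using finite_nat_set_iff_bounded_le by blast
    then show False using that[rule_format, of "M + Suc k + 1"] by auto
  qed
  show ?thesis
  proof (cases "d (Suc k) = 1")
    case True
    then have "d' (Suc k) = 0" using k bin01_cases[OF b(2), of "Suc k"] by auto
    then show ?thesis using first_diff[OF b(1,2) k(1) True _ v] fin inf by blast
  next
    case False
    then have "d (Suc k) = 0" "d' (Suc k) = 1" using k False bin01_cases[OF b(1), of "Suc k"] bin01_cases[OF b(2), of "Suc k"] by auto
    then show ?thesis using first_diff[OF b(2,1) _ _ _ v[symmetric]] k fin inf by (metis)
  qed
qed

lemma betaP_unique: "betaP b x \<Longrightarrow> betaP b' x \<Longrightarrow> b = b'"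
  unfolding betaP_alt using two_expansions[of b b'] by metis


lemma beta_exists:
  fixes x :: real assumes x: "0 < x" "x \<le> 1"
  shows "\<exists>b. betaP b x"
proof -
  define a :: "nat \<Rightarrow> int" where "a n = \<lceil>2^n * x\<rceil> - 1" for n
  have a1: "real_of_int (a n) < 2^n * x" for n unfolding a_def by linarith
  have a2: "2^n * x \<le> real_of_int (a n) + 1" for n unfolding a_def by linarith
  have a0: "a 0 = 0" unfolding a_def using x by (simp add: ceiling_eq_iff)
  have step: "a (Suc n) - 2 * a n \<in> {0, 1}" for n
  proof -
    have "real_of_int (a (Suc n)) + 1 > 2 * real_of_int (a n)"
      using a2[of "Suc n"] a1[of n] by simp
    then have l: "a (Suc n) + 1 > 2 * a n" by linarith
    have "real_of_int (a (Suc n)) < 2 * real_of_int (a n) + 2"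
      using a1[of "Suc n"] a2[of n] by simp
    then have u: "a (Suc n) < 2 * a n + 2" by linarith
    show ?thesis using l u by auto
  qed
  define d :: "nat \<Rightarrow> nat" where "d n = (if n = 0 then 0 else nat (a n - 2 * a (n - 1)))" for n
  have dS: "int (d (Suc n)) = a (Suc n) - 2 * a n" for n
    using step[of n] by (auto simp: d_def)
  have db: "bin01 d" unfolding bin01_def
  proof
    fix n show "d n \<in> {0,1}"
      using step[of "n - 1"] by (cases n) (auto simp: d_def)
  qed
  have ps: "sum (dterm d) {..<n} = real_of_int (a n) / 2^n" for n
  proof (induction n)
    case 0 then show ?case by (simp add: a0)
  next
    case (Suc n)
    have "real (d (Suc n)) = real_of_int (a (Suc n)) - 2 * real_of_int (a n)"
      using dS[of n] by (metis of_int_diff of_int_mult of_int_numeral of_int_of_nat_eq)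
    then show ?case using Suc by (simp add: dterm_def field_simps)
  qed
  have lim: "(\<lambda>n. real_of_int (a n) / 2^n) \<longlonglongrightarrow> x"
  proof (rule real_tendsto_sandwich)
    have "x - (1/2)^n \<le> real_of_int (a n) / 2^n" for n
    proof -
      have "x - (1/2)^n = (2^n*x - 1)/2^n" by (simp add: field_simps power_one_over)
      also have "\<dots> \<le> real_of_int (a n) / 2^n"
        by (rule divide_right_mono) (use a2[of n] in auto)
      finally show ?thesis .
    qed
    then show "\<forall>\<^sub>F n in sequentially. x - (1/2)^n \<le> real_of_int (a n) / 2^n"
      by (auto intro!: always_eventually)
    show "\<forall>\<^sub>F n in sequentially. real_of_int (a n) / 2^n \<le> x"
      using a1 by (intro always_eventually allI) (simp add: divide_le_eq less_imp_le mult.commute)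
    have "(\<lambda>n. x - (1/2::real)^n) \<longlonglongrightarrow> x - 0"
      by (intro tendsto_intros LIMSEQ_power_zero) simp
    then show "(\<lambda>n. x - (1/2::real)^n) \<longlonglongrightarrow> x" by simp
  qed simp
  have sums: "dterm d sums x" unfolding sums_def using lim ps by simp
  have inf: "infinite {n. d n = 1}"
  proof
    assume "finite {n. d n = 1}"
    then obtain M where M: "\<forall>n\<in>{n. d n = 1}. n \<le> M" using finite_nat_set_iff_bounded_le by blast
    have z: "n > M \<Longrightarrow> d n = 0" for n using M bin01_cases[OF db, of n] by force
    have const: "sum (dterm d) {..<n} = sum (dterm d) {..<M}" if "n \<ge> M" for n
      using that
    proof (induction n rule: dec_induct)
      case (step n)
      then show ?case using z[of "Suc n"] by (simp add: dterm_def)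
    qed simp
    have "(\<lambda>n. sum (dterm d) {..<n}) \<longlonglongrightarrow> sum (dterm d) {..<M}"
    proof (rule LIMSEQ_offset[where k=M])
      have "(\<lambda>n. sum (dterm d) {..<n+M}) = (\<lambda>n. sum (dterm d) {..<M})"
        by (rule ext) (rule const, simp)
      then show "(\<lambda>n. sum (dterm d) {..<n+M}) \<longlonglongrightarrow> sum (dterm d) {..<M}" by simp
    qed
    moreover have "(\<lambda>n. sum (dterm d) {..<n}) \<longlonglongrightarrow> x" using sums unfolding sums_def .
    ultimately have "x = sum (dterm d) {..<M}" using LIMSEQ_unique by blast
    then show False using ps[of M] a1[of M] by (simp add: field_simps)
  qed
  have d0: "d 0 = 0" by (simp add: d_def)
  have "betaP d x" unfolding betaP_def dterm_fun using sums inf db d0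
    unfolding bin01_def by blast
  then show ?thesis by blast
qed

lemma beta_prop: "0 < x \<Longrightarrow> x \<le> 1 \<Longrightarrow> betaP (beta x) x"
  using beta_exists[of x] unfolding beta_def betaP_def[abs_def]
  by (rule someI_ex)

lemma beta_eq: "betaP b x \<Longrightarrow> beta x = b"
  using betaP_unique[OF someI_ex[of "\<lambda>b. betaP b x"]] unfolding beta_def betaP_def[abs_def]
  by blast


lemma enumerate_card:
  fixes A :: "nat set"
  assumes inf: "infinite A" and m: "m \<in> A"
  shows "enumerate A (card {a\<in>A. a < m}) = m"
proof -
  have sm: "strict_mono (enumerate A)" using strict_mono_enumerate[OF inf] .
  obtain k where k: "m = enumerate A k" using m range_enumerate[OF inf] by blast
  have "{a\<in>A. a < m} = enumerate A ` {..<k}"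
  proof
    show "{a\<in>A. a < m} \<subseteq> enumerate A ` {..<k}"
    proof
      fix a assume a: "a \<in> {a\<in>A. a < m}"
      then obtain i where i: "a = enumerate A i" using range_enumerate[OF inf] by blast
      then have "i < k" using a k strict_mono_less[OF sm] by auto
      then show "a \<in> enumerate A ` {..<k}" using i by auto
    qed
    show "enumerate A ` {..<k} \<subseteq> {a\<in>A. a < m}"
      using k strict_mono_less[OF sm] enumerate_in_set[OF inf] by auto
  qed
  moreover have "card (enumerate A ` {..<k}) = k"
    by (subst card_image) (auto intro: strict_mono_imp_inj_on[OF sm])
  ultimately show ?thesis using k by simp
qed

lemma par_div_inj: "(even (a::nat) \<longleftrightarrow> even a') \<Longrightarrow> (a+1) div 2 = (a'+1) div 2 \<Longrightarrow> a = a'"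
proof (cases "even a")
  case True
  assume e: "(even (a::nat) \<longleftrightarrow> even a')" "(a+1) div 2 = (a'+1) div 2"
  obtain k where k: "a = 2*k" using True by (auto elim: evenE)
  obtain k' where k': "a' = 2*k'" using True e by (auto elim: evenE)
  show ?thesis using e(2) unfolding k k' by simp
next
  case False
  assume e: "(even (a::nat) \<longleftrightarrow> even a')" "(a+1) div 2 = (a'+1) div 2"
  obtain k where k: "a = 2*k+1" using False by (auto elim: oddE)
  obtain k' where k': "a' = 2*k'+1" using False e by (auto elim: oddE)
  show ?thesis using e(2) unfolding k k' by simp
qed

definition Ncnt :: "(nat \<Rightarrow> nat) \<Rightarrow> nat \<Rightarrow> nat" where
  "Ncnt w j = card {i\<in>{1..j}. w i = 1}"

definition hblk :: "(nat \<Rightarrow> nat) \<Rightarrow> (nat \<Rightarrow> nat) \<Rightarrow> nat \<Rightarrow> real" where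
  "hblk c w j = (if w j = 1 then (if c (Ncnt w j) = 1 then 1 else 2) / 4 ^ j else 0)"

definition Bdig :: "(nat \<Rightarrow> nat) \<Rightarrow> (nat \<Rightarrow> nat) \<Rightarrow> nat \<Rightarrow> nat" where
  "Bdig c w n = (if n = 0 then 0 else
     if w ((n+1) div 2) = 1 \<and> (c (Ncnt w ((n+1) div 2)) = 1 \<longleftrightarrow> even n) then 1 else 0)"

definition Phi :: "(nat \<Rightarrow> nat) \<Rightarrow> real \<Rightarrow> real" where
  "Phi c t = (\<Sum>n. hblk c (beta t) (Suc n))"

lemma Bdig_bin: "bin01 (Bdig c w)" "Bdig c w 0 = 0"
  unfolding bin01_def Bdig_def by auto

lemma Bdig_group: "sum (dterm (Bdig c w)) {n*2..<n*2+2} = hblk c w (Suc n)"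
proof -
  have e1: "(Suc (n*2) + 1) div 2 = Suc n" by simp
  have e2: "(Suc (Suc (n*2)) + 1) div 2 = Suc n" by simp
  have p: "(2::real) ^ Suc (Suc (n*2)) = 4 ^ Suc n"
  proof -
    have "(4::real) ^ Suc n = (2^2) ^ Suc n" by simp
    also have "\<dots> = 2 ^ (2 * Suc n)" by (simp only: power_mult)
    finally show ?thesis by simp
  qed
  have "sum (dterm (Bdig c w)) {n*2..<n*2+2} = dterm (Bdig c w) (n*2) + dterm (Bdig c w) (Suc (n*2))"
    by (simp add: numeral_2_eq_2)
  also have "\<dots> = hblk c w (Suc n)"
    unfolding dterm_def Bdig_def hblk_def e1 e2 using p
    by (auto simp: field_simps)
  finally show ?thesis .
qed


context
  fixes c w :: "nat \<Rightarrow> nat"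
  assumes c: "bin01 c" "c 0 = 0" and w: "bin01 w" "w 0 = 0" "infinite {n. w n = 1}"
begin

lemma sums_B: "(\<lambda>n. hblk c w (Suc n)) sums suminf (dterm (Bdig c w))"
proof -
  have "dterm (Bdig c w) sums suminf (dterm (Bdig c w))"
    using summable_dterm[OF Bdig_bin(1)] by (simp add: summable_sums)
  from sums_group[OF this, of 2] show ?thesis unfolding Bdig_group by simp
qed

lemma pos_blk: "j \<ge> 1 \<Longrightarrow> ((if P then 2*j else 2*j - 1) + 1) div 2 = (j::nat)"
  by (cases P) auto

lemma pos_par: "j \<ge> 1 \<Longrightarrow> even (if P then 2*j else 2*(j::nat) - 1) \<longleftrightarrow> P"
proof -
  assume "j \<ge> 1"
  then obtain k where k: "j = Suc k" by (cases j) auto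
  show ?thesis unfolding k by (cases P) auto
qed

lemma pos_of_w: "w j = 1 \<Longrightarrow> Bdig c w (if c (Ncnt w j) = 1 then 2*j else 2*j - 1) = 1"
proof -
  assume wj: "w j = 1"
  then have j1: "j \<ge> 1" using w(2) by (cases j) auto
  let ?p = "if c (Ncnt w j) = 1 then 2*j else 2*j - 1"
  have "?p \<noteq> 0" using j1 by auto
  moreover have "(?p + 1) div 2 = j" by (rule pos_blk[OF j1])
  moreover have "even ?p \<longleftrightarrow> c (Ncnt w j) = 1" by (rule pos_par[OF j1])
  ultimately show ?thesis using wj unfolding Bdig_def by simp
qed

lemma inf_B: "infinite {n. Bdig c w n = 1}"
proof
  assume f: "finite {n. Bdig c w n = 1}"
  have "{n. w n = 1} \<subseteq> (\<lambda>n. (n+1) div 2) ` {n. Bdig c w n = 1}"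
  proof
    fix j assume "j \<in> {n. w n = 1}"
    then have wj: "w j = 1" by simp
    then have j1: "j \<ge> 1" using w(2) by (cases j) auto
    let ?p = "if c (Ncnt w j) = 1 then 2*j else 2*j - 1"
    have "j = (?p + 1) div 2" by (rule pos_blk[OF j1, symmetric])
    moreover have "?p \<in> {n. Bdig c w n = 1}" using pos_of_w[OF wj] by simp
    ultimately show "j \<in> (\<lambda>n. (n+1) div 2) ` {n. Bdig c w n = 1}"
      by (rule image_eqI)
  qed
  then show False using w(3) f finite_surj by blast
qed

lemma B_one:
  assumes "Bdig c w m = 1"
  shows "m \<ge> 1 \<and> w ((m+1) div 2) = 1 \<and> (c (Ncnt w ((m+1) div 2)) = 1 \<longleftrightarrow> even m)"
proof -
  have m0: "m \<noteq> 0" using assms unfolding Bdig_def by (cases "m = 0") simp_all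
  have "w ((m+1) div 2) = 1 \<and> (c (Ncnt w ((m+1) div 2)) = 1 \<longleftrightarrow> even m)"
  proof (rule ccontr)
    assume "\<not> ?thesis"
    then have "Bdig c w m = 0" unfolding Bdig_def using m0 by (simp only: if_False if_not_P)
    then show False using assms by simp
  qed
  then show ?thesis using m0 by simp
qed

lemma B_inj: "Bdig c w a = 1 \<Longrightarrow> Bdig c w a' = 1 \<Longrightarrow> (a+1) div 2 = (a'+1) div 2 \<Longrightarrow> a = a'"
proof -
  assume a: "Bdig c w a = 1" and a': "Bdig c w a' = 1" and e: "(a+1) div 2 = (a'+1) div 2"
  have i1: "c (Ncnt w ((a+1) div 2)) = 1 \<longleftrightarrow> even a" using B_one[OF a] by blast
  have i2: "c (Ncnt w ((a'+1) div 2)) = 1 \<longleftrightarrow> even a'" using B_one[OF a'] by blast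
  have "even a \<longleftrightarrow> even a'" using i1 i2 e by metis
  then show "a = a'" using e by (rule par_div_inj)
qed

lemma card_below:
  assumes m: "Bdig c w m = 1"
  shows "card {a\<in>{n. 1 \<le> n \<and> Bdig c w n = 1}. a < m} + 1 = Ncnt w ((m+1) div 2)"
proof -
  define j where "j = (m+1) div 2"
  have m1: "m \<ge> 1" and wj: "w j = 1" and par: "c (Ncnt w j) = 1 \<longleftrightarrow> even m"
    using B_one[OF m] unfolding j_def by auto
  let ?S = "{a\<in>{n. 1 \<le> n \<and> Bdig c w n = 1}. a < m}"
  let ?T = "{i. 1 \<le> i \<and> i < j \<and> w i = 1}"
  have inj: "inj_on (\<lambda>n. (n+1) div 2) ?S"
    by (rule inj_onI) (use B_inj in auto)
  have img: "(\<lambda>n. (n+1) div 2) ` ?S = ?T"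
  proof
    show "(\<lambda>n. (n+1) div 2) ` ?S \<subseteq> ?T"
    proof
      fix i assume "i \<in> (\<lambda>n. (n+1) div 2) ` ?S"
      then obtain a where a: "a \<in> ?S" "i = (a+1) div 2" by auto
      have ba: "Bdig c w a = 1" "a < m" "a \<ge> 1" using a by auto
      have "i \<le> j" using a(2) ba(2) unfolding j_def by (simp add: div_le_mono)
      moreover have "i \<noteq> j"
      proof
        assume "i = j"
        then have "a = m" using B_inj[OF ba(1) m] a(2) unfolding j_def by simp
        then show False using ba(2) by simp
      qed
      moreover have "i \<ge> 1" using ba(3) a(2) by auto
      moreover have "w i = 1" using B_one[OF ba(1)] a(2) by simp
      ultimately show "i \<in> ?T" by auto
    qed
    show "?T \<subseteq> (\<lambda>n. (n+1) div 2) ` ?S"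
    proof
      fix i assume i: "i \<in> ?T"
      let ?p = "if c (Ncnt w i) = 1 then 2*i else 2*i - 1"
      have bp: "Bdig c w ?p = 1" using pos_of_w i by auto
      have jm: "j * 2 \<le> m + 1" unfolding j_def by (rule div_times_less_eq_dividend)
      have "?p \<le> 2 * i" by auto
      moreover have "i < j" using i by simp
      ultimately have "?p < m" using jm by linarith
      moreover have "(?p + 1) div 2 = i" using i by auto
      moreover have "?p \<ge> 1" using i by auto
      ultimately have "?p \<in> ?S" "i = (?p + 1) div 2" using bp by auto
      then show "i \<in> (\<lambda>n. (n+1) div 2) ` ?S" by (rule rev_image_eqI)
    qed
  qed
  have cS: "card ?S = card ?T" using card_image[OF inj] img by simp
  have j1: "j \<ge> 1" using m1 unfolding j_def by simp
  have "{i\<in>{1..j}. w i = 1} = insert j ?T" using wj j1 by auto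
  moreover have "finite ?T" by (rule finite_subset[of _ "{..<j}"]) auto
  moreover have "j \<notin> ?T" by simp
  ultimately have "Ncnt w j = card ?T + 1" unfolding Ncnt_def by simp
  then show ?thesis using cS unfolding j_def by simp
qed

lemma rho_B: "rho (Bdig c w) = c"
proof
  fix k
  let ?A = "{n. 1 \<le> n \<and> Bdig c w n = 1}"
  have infA: "infinite ?A"
  proof -
    have "{n. Bdig c w n = 1} = ?A" using B_one by auto
    then show ?thesis using inf_B by simp
  qed
  show "rho (Bdig c w) k = c k"
  proof (cases k)
    case 0 then show ?thesis using c(2) by (simp add: rho_def)
  next
    case (Suc k')
    define m where "m = enumerate ?A k'"
    have mA: "m \<in> ?A" unfolding m_def by (rule enumerate_in_set[OF infA])
    have "enumerate ?A (card {a\<in>?A. a < m}) = enumerate ?A k'"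
      using enumerate_card[OF infA mA] unfolding m_def by simp
    then have ck: "card {a\<in>?A. a < m} = k'"
      using strict_mono_imp_inj_on[OF strict_mono_enumerate[OF infA]] by (auto dest: injD)
    have bm: "Bdig c w m = 1" using mA by simp
    have "Ncnt w ((m+1) div 2) = Suc k'" using card_below[OF bm] ck by simp
    then have "c (Suc k') = 1 \<longleftrightarrow> even m" using B_one[OF bm] by simp
    then have "c (Suc k') = (if even m then 1 else 0)" using bin01_cases[OF c(1), of "Suc k'"] by auto
    then show ?thesis using Suc by (simp add: rho_def m_def)
  qed
qed

lemma val_B_pos: "0 < suminf (dterm (Bdig c w))"
proof -
  obtain n where n: "Bdig c w n = 1" using inf_B not_finite_existsD by blast
  then have "n \<ge> 1" using B_one by auto
  then have "0 < dterm (Bdig c w) (n - 1)" using n by (simp add: dterm_def)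
  then show ?thesis
    by (intro suminf_pos2[OF summable_dterm[OF Bdig_bin(1)]]) (auto simp: dterm_nonneg)
qed

lemma val_B_le: "suminf (dterm (Bdig c w)) \<le> 1"
  using dval_split[OF Bdig_bin(1), of c w 0] dtail_le[OF Bdig_bin(1), of c w 0] by simp

lemma betaP_B: "betaP (Bdig c w) (suminf (dterm (Bdig c w)))"
  unfolding betaP_alt using Bdig_bin inf_B by auto

end


lemma hblk_nonneg: "0 \<le> hblk c w j"
  unfolding hblk_def by auto

lemma hblk_le: "hblk c w j \<le> 2 / 4 ^ j"
  unfolding hblk_def by (auto simp: divide_right_mono)

lemma hblk_ge: "w j = 1 \<Longrightarrow> 1 / 4 ^ j \<le> hblk c w j"
  unfolding hblk_def by (auto simp: divide_right_mono)

lemma hblk_zero: "w j = 0 \<Longrightarrow> hblk c w j = 0"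
  unfolding hblk_def by auto

lemma Ncnt_agree: "\<forall>i\<le>k. w i = w' i \<Longrightarrow> j \<le> k \<Longrightarrow> Ncnt w j = Ncnt w' j"
  unfolding Ncnt_def by (rule arg_cong[where f=card]) auto

lemma hblk_agree: "\<forall>i\<le>k. w i = w' i \<Longrightarrow> j \<le> k \<Longrightarrow> hblk c w j = hblk c w' j"
  unfolding hblk_def using Ncnt_agree[of k w w' j] by auto

lemma summable_hblk: "summable (\<lambda>n. hblk c w (n + m))"
proof (rule summable_comparison_test[of _ "\<lambda>n. (1/4)^n * (2 / 4^m)"])
  show "\<exists>N. \<forall>n\<ge>N. norm (hblk c w (n + m)) \<le> (1/4)^n * (2 / 4^m)"
  proof (intro exI allI impI)
    fix n :: nat
    have "hblk c w (n + m) \<le> 2 / 4 ^ (n + m)" by (rule hblk_le)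
    also have "\<dots> = (1/4)^n * (2 / 4^m)" by (simp add: power_add field_simps power_one_over)
    finally show "norm (hblk c w (n + m)) \<le> (1/4)^n * (2 / 4^m)" using hblk_nonneg by simp
  qed
  show "summable (\<lambda>n. (1/4::real)^n * (2 / 4^m))"
    by (intro summable_mult2 summable_geometric) simp
qed

lemma hblk_tail_le: "(\<Sum>n. hblk c w (n + m)) \<le> 8 / (3 * 4^m)"
proof -
  have "(\<Sum>n. hblk c w (n + m)) \<le> (\<Sum>n. (1/4::real)^n * (2 / 4^m))"
  proof (rule suminf_le)
    show "summable (\<lambda>n. (1/4::real)^n * (2 / 4^m))"
      by (intro summable_mult2 summable_geometric) simp
    fix n :: nat
    have "hblk c w (n + m) \<le> 2 / 4 ^ (n + m)" by (rule hblk_le)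
    also have "\<dots> = (1/4)^n * (2 / 4^m)" by (simp add: power_add field_simps power_one_over)
    finally show "hblk c w (n + m) \<le> (1/4)^n * (2 / 4^m)" .
  qed (rule summable_hblk)
  also have "\<dots> = (\<Sum>n. (1/4::real)^n) * (2 / 4^m)"
    by (rule suminf_mult2[symmetric]) (rule summable_geometric, simp)
  also have "\<dots> = 8 / (3 * 4^m)" by (simp add: suminf_geometric)
  finally show ?thesis .
qed

lemma suminf_diff_split:
  fixes f g :: "nat \<Rightarrow> real"
  assumes "summable f" "summable g" "\<forall>n<k. f n = g n"
  shows "suminf f - suminf g = f k - g k + ((\<Sum>n. f (n + Suc k)) - (\<Sum>n. g (n + Suc k)))"
proof -
  have "sum f {..<k} = sum g {..<k}" using assms(3) by (intro sum.cong) auto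
  then show ?thesis
    using suminf_split_initial_segment[OF assms(1), of "Suc k"]
      suminf_split_initial_segment[OF assms(2), of "Suc k"] by simp
qed

context
  fixes c :: "nat \<Rightarrow> nat" and y :: real
  assumes c: "bin01 c" "c 0 = 0" "suminf (dterm c) = y"
begin

lemma Phi_val:
  assumes t: "0 < t" "t \<le> 1"
  shows "Phi c t = suminf (dterm (Bdig c (beta t)))"
proof -
  have b: "betaP (beta t) t" by (rule beta_prop[OF t])
  then have "bin01 (beta t)" "beta t 0 = 0" "infinite {n. beta t n = 1}" unfolding betaP_alt by auto
  from sums_B[OF c(1,2) this] show ?thesis unfolding Phi_def by (simp add: sums_iff)
qed

lemma Phi_props:
  assumes t: "0 < t" "t \<le> 1"
  shows "0 < Phi c t" "Phi c t \<le> 1" "R (Phi c t) = y"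
proof -
  have b: "betaP (beta t) t" by (rule beta_prop[OF t])
  then have w: "bin01 (beta t)" "beta t 0 = 0" "infinite {n. beta t n = 1}" unfolding betaP_alt by auto
  note pv = Phi_val[OF t]
  show p: "0 < Phi c t" using val_B_pos[OF c(1,2) w] pv by simp
  show "Phi c t \<le> 1" using val_B_le[OF c(1,2) w] pv by simp
  have be: "beta (Phi c t) = Bdig c (beta t)"
    using beta_eq[OF betaP_B[OF c(1,2) w]] pv by simp
  have "R (Phi c t) = (\<Sum>k. real (rho (beta (Phi c t)) (Suc k)) / 2 ^ Suc k)"
    unfolding R_def using p by simp
  also have "\<dots> = suminf (dterm c)" unfolding be rho_B[OF c(1,2) w] dterm_fun ..
  finally show "R (Phi c t) = y" using c(3) by simp
qed

lemma holder_core: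
  assumes t: "0 < t" "t \<le> 1" and t': "0 < t'" "t' \<le> 1"
    and agree: "\<forall>n\<le>k. beta t n = beta t' n" and d: "beta t (Suc k) = 1" "beta t' (Suc k) = 0"
  shows "(t - t')^2 \<le> 12 * \<bar>Phi c t - Phi c t'\<bar>"
proof -
  have b: "betaP (beta t) t" by (rule beta_prop[OF t])
  have b': "betaP (beta t') t'" by (rule beta_prop[OF t'])
  have w: "bin01 (beta t)" "suminf (dterm (beta t)) = t" using b unfolding betaP_alt by auto
  have w': "bin01 (beta t')" "suminf (dterm (beta t')) = t'" using b' unfolding betaP_alt by auto
  have s: "sum (dterm (beta t)) {..<k} = sum (dterm (beta t')) {..<k}"
    by (rule sum.cong) (auto simp: dterm_def agree)
  have tt: "\<bar>t - t'\<bar> \<le> (1/2)^k"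
    using dval_split[OF w(1), of k] dval_split[OF w'(1), of k] w(2) w'(2) s
      dtail_nonneg[OF w(1), of k] dtail_le[OF w(1), of k]
      dtail_nonneg[OF w'(1), of k] dtail_le[OF w'(1), of k] by linarith
  let ?f = "\<lambda>n. hblk c (beta t) (Suc n)" and ?g = "\<lambda>n. hblk c (beta t') (Suc n)"
  have sf: "summable ?f" using summable_hblk[of c "beta t" 1] by simp
  have sg: "summable ?g" using summable_hblk[of c "beta t'" 1] by simp
  have eq: "\<forall>n<k. ?f n = ?g n" using hblk_agree[OF agree] by auto
  have split: "Phi c t - Phi c t' = ?f k - ?g k + ((\<Sum>n. ?f (n + Suc k)) - (\<Sum>n. ?g (n + Suc k)))"
    unfolding Phi_def by (rule suminf_diff_split[OF sf sg eq])
  have fk: "?f k \<ge> 1 / 4^Suc k" using hblk_ge[of "beta t" "Suc k" c, OF d(1)] .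
  have gk: "?g k = 0" using hblk_zero[of "beta t'" "Suc k" c, OF d(2)] .
  have tf: "(\<Sum>n. ?f (n + Suc k)) \<ge> 0"
    using suminf_nonneg[OF summable_hblk[of c "beta t" "Suc (Suc k)"]] hblk_nonneg by simp
  have tg: "(\<Sum>n. ?g (n + Suc k)) \<le> 8 / (3 * 4 ^ Suc (Suc k))"
    using hblk_tail_le[of c "beta t'" "Suc (Suc k)"] by simp
  have "8 / (3 * 4 ^ Suc (Suc k)) = (2/3) * (1 / 4^Suc k :: real)" by (simp add: field_simps)
  then have pd: "Phi c t - Phi c t' \<ge> (1/3) * (1 / 4^Suc k)"
    using split fk gk tf tg by linarith
  have "(t - t')^2 = \<bar>t - t'\<bar>^2" by simp
  also have "\<dots> \<le> ((1/2)^k)^2" by (rule power_mono[OF tt]) simp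
  also have "\<dots> = 12 * ((1/3) * (1 / 4^Suc k))"
  proof -
    have "((1/2::real)^k)^2 = ((1/2)^2)^k" by (simp only: power_mult[symmetric] mult.commute)
    also have "\<dots> = 1 / 4^k" by (simp add: power_one_over)
    finally show ?thesis by simp
  qed
  also have "\<dots> \<le> 12 * \<bar>Phi c t - Phi c t'\<bar>"
    by (rule mult_left_mono) (use pd in auto)
  finally show ?thesis .
qed

lemma holder:
  assumes t: "0 < t" "t \<le> 1" and t': "0 < t'" "t' \<le> 1"
  shows "(t - t')^2 \<le> 12 * \<bar>Phi c t - Phi c t'\<bar>"
proof (cases "beta t = beta t'")
  case True
  have "suminf (dterm (beta t)) = t" "suminf (dterm (beta t')) = t'"
    using beta_prop[OF t] beta_prop[OF t'] unfolding betaP_alt by blast+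
  then have "t = t'" using True by metis
  then show ?thesis by simp
next
  case False
  have b: "betaP (beta t) t" by (rule beta_prop[OF t])
  have b': "betaP (beta t') t'" by (rule beta_prop[OF t'])
  have z: "beta t 0 = beta t' 0" using b b' unfolding betaP_alt by auto
  obtain k where k: "\<forall>n\<le>k. beta t n = beta t' n" "beta t (Suc k) \<noteq> beta t' (Suc k)"
    using exists_first_diff[OF False z] by blast
  have bb: "bin01 (beta t)" "bin01 (beta t')" using b b' unfolding betaP_alt by auto
  show ?thesis
  proof (cases "beta t (Suc k) = 1")
    case True
    then have "beta t' (Suc k) = 0" using k(2) bin01_cases[OF bb(2), of "Suc k"] by auto
    then show ?thesis by (rule holder_core[OF t t' k(1) True])
  next
    case False
    then have "beta t (Suc k) = 0" "beta t' (Suc k) = 1"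
      using k(2) False bin01_cases[OF bb(1), of "Suc k"] bin01_cases[OF bb(2), of "Suc k"] by auto
    moreover have "\<forall>n\<le>k. beta t' n = beta t n" using k(1) by auto
    ultimately have "(t' - t)^2 \<le> 12 * \<bar>Phi c t' - Phi c t\<bar>"
      using holder_core[OF t' t] by blast
    moreover have "(t - t')^2 = (t' - t)^2" by (rule power2_commute)
    moreover have "\<bar>Phi c t - Phi c t'\<bar> = \<bar>Phi c t' - Phi c t\<bar>" by (rule abs_minus_commute)
    ultimately show ?thesis by simp
  qed
qed

end


lemma exists_c:
  assumes "0 \<le> y" "y \<le> (1::real)"
  shows "\<exists>c. bin01 c \<and> c 0 = 0 \<and> suminf (dterm c) = y"
proof (cases "y = 0")
  case True
  have "dterm (\<lambda>_. 0) = (\<lambda>_. 0)" by (rule ext) (simp add: dterm_def)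
  then show ?thesis using True by (intro exI[of _ "\<lambda>_. 0"]) (simp add: bin01_def)
next
  case False
  then have "betaP (beta y) y" using assms by (intro beta_prop) auto
  then show ?thesis unfolding betaP_alt by blast
qed

lemma cover_measure_bound:
  fixes c :: "nat \<Rightarrow> nat" and y s :: real and U :: "nat \<Rightarrow> real set"
  assumes c: "bin01 c" "c 0 = 0" "suminf (dterm c) = y"
    and s: "0 \<le> s" "s \<le> 1/2"
    and cov: "Phi c ` {0<..1} \<subseteq> (\<Union>i. U i)"
    and U: "\<And>i. bounded (U i)" "\<And>i. diameter (U i) \<le> 1"
  shows "ennreal (1 / (2 * sqrt 12)) \<le> (\<Sum>i. ennreal (diameter (U i) powr s))"
proof -
  define C where "C = 2 * sqrt (12::real)"
  have C0: "C > 0" unfolding C_def by simp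
  define V where "V i = {t \<in> {0<..1}. Phi c t \<in> U i}" for i
  define r where "r i = sqrt (12 * diameter (U i))" for i
  define W where "W i = (if V i = {} then {} else cball (SOME t. t \<in> V i) (r i))" for i
  have d0: "0 \<le> diameter (U i)" for i by (rule diameter_ge_0[OF U(1)])
  have VW: "V i \<subseteq> W i" for i
  proof (cases "V i = {}")
    case False
    define t0 where "t0 = (SOME t. t \<in> V i)"
    have t0: "t0 \<in> V i" unfolding t0_def using False by (simp add: some_in_eq)
    have "V i \<subseteq> cball t0 (r i)"
    proof
      fix t assume t: "t \<in> V i"
      have "(t0 - t)^2 \<le> 12 * \<bar>Phi c t0 - Phi c t\<bar>"
        using holder[OF c, of t0 t] t0 t unfolding V_def by auto
      also have "\<bar>Phi c t0 - Phi c t\<bar> \<le> diameter (U i)"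
        using diameter_bounded_bound[OF U(1), of "Phi c t0" i "Phi c t"] t0 t
        unfolding V_def by (auto simp: dist_real_def)
      then have "12 * \<bar>Phi c t0 - Phi c t\<bar> \<le> 12 * diameter (U i)" by simp
      finally have "\<bar>t0 - t\<bar> \<le> r i" unfolding r_def by (intro real_le_rsqrt) simp
      then show "t \<in> cball t0 (r i)" by (simp add: dist_real_def)
    qed
    then show ?thesis unfolding W_def t0_def using False by simp
  qed (simp)
  have Wclosed: "W i \<in> sets lborel" for i unfolding W_def by (auto intro: borel_closed)
  have Wm: "emeasure lborel (W i) \<le> ennreal (C * diameter (U i) powr s)" for i
  proof -
    have "emeasure lborel (W i) \<le> ennreal (2 * r i)"
    proof (cases "V i = {}")
      case True then show ?thesis unfolding W_def by simp
    next
      case False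
      have "r i \<ge> 0" unfolding r_def using d0[of i] by simp
      then show ?thesis unfolding W_def using False
        by (simp add: cball_eq_atLeastAtMost emeasure_lborel_Icc)
    qed
    also have "2 * r i \<le> C * diameter (U i) powr s"
    proof (cases "diameter (U i) = 0")
      case True then show ?thesis unfolding r_def by simp
    next
      case False
      have "2 * r i = C * diameter (U i) powr (1/2)"
        unfolding r_def C_def using d0[of i] by (simp add: real_sqrt_mult powr_half_sqrt)
      also have "\<dots> \<le> C * diameter (U i) powr s"
        using C0 d0[of i] U(2)[of i] s by (intro mult_left_mono powr_mono') auto
      finally show ?thesis .
    qed
    then have "ennreal (2 * r i) \<le> ennreal (C * diameter (U i) powr s)" by (rule ennreal_leI)
    finally show ?thesis .
  qed
  have "{0<..1::real} \<subseteq> (\<Union>i. W i)"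
  proof
    fix t :: real assume t: "t \<in> {0<..1}"
    then obtain i where "Phi c t \<in> U i" using cov by blast
    then have "t \<in> V i" using t unfolding V_def by auto
    then show "t \<in> (\<Union>i. W i)" using VW by blast
  qed
  then have "emeasure lborel {0<..1::real} \<le> emeasure lborel (\<Union>i. W i)"
    by (rule emeasure_mono) (use Wclosed in auto)
  also have "\<dots> \<le> (\<Sum>i. emeasure lborel (W i))"
    by (rule emeasure_subadditive_countably) (use Wclosed in auto)
  also have "\<dots> \<le> (\<Sum>i. ennreal (C * diameter (U i) powr s))"
    by (intro suminf_le Wm summableI)
  also have "\<dots> = ennreal C * (\<Sum>i. ennreal (diameter (U i) powr s))"
    using C0 by (simp add: ennreal_mult ennreal_suminf_cmult)
  finally have one: "1 \<le> ennreal C * (\<Sum>i. ennreal (diameter (U i) powr s))"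
    by (simp add: emeasure_lborel_Ioc)
  have "ennreal (1/C) = ennreal (1/C) * 1" by simp
  also have "\<dots> \<le> ennreal (1/C) * (ennreal C * (\<Sum>i. ennreal (diameter (U i) powr s)))"
    by (rule mult_left_mono[OF one]) simp
  also have "\<dots> = (ennreal (1/C) * ennreal C) * (\<Sum>i. ennreal (diameter (U i) powr s))"
    by (simp add: mult.assoc)
  also have "ennreal (1/C) * ennreal C = 1"
    using C0 by (simp add: ennreal_mult[symmetric])
  finally show ?thesis unfolding C_def by simp
qed

lemma lower_H:
  assumes y: "y \<in> {0..1::real}" and s: "0 \<le> s" "s \<le> 1/2"
  shows "hausdorff_measure s {x \<in> {0..1}. R x = y} \<noteq> 0"
proof -
  obtain c where c: "bin01 c" "c 0 = 0" "suminf (dterm c) = y" using exists_c y by auto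
  let ?F = "{x \<in> {0..1}. R x = y}"
  have K: "Phi c ` {0<..1} \<subseteq> ?F"
    using Phi_props[OF c] by fastforce
  have "ennreal (1 / (2 * sqrt 12)) \<le> hausdorff_pre s 1 ?F"
    unfolding hausdorff_pre_def
  proof (rule INF_greatest)
    fix U assume "U \<in> {U :: nat \<Rightarrow> real set. ?F \<subseteq> (\<Union>i. U i) \<and> (\<forall>i. bounded (U i) \<and> diameter (U i) \<le> 1)}"
    then have U: "?F \<subseteq> (\<Union>i. U i)" "\<And>i. bounded (U i)" "\<And>i. diameter (U i) \<le> 1" by auto
    show "ennreal (1 / (2 * sqrt 12)) \<le> (\<Sum>i. ennreal (diameter (U i) powr s))"
      by (rule cover_measure_bound[OF c s _ U(2,3)]) (use K U(1) in blast)
  qed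
  also have "\<dots> \<le> hausdorff_measure s ?F"
    unfolding hausdorff_measure_def by (rule SUP_upper) simp
  finally have "ennreal (1 / (2 * sqrt 12)) \<le> hausdorff_measure s ?F" .
  moreover have "ennreal (1 / (2 * sqrt 12)) > 0" by simp
  ultimately show ?thesis by auto
qed

lemma dim_lower:
  assumes y: "y \<in> {0..1::real}"
  shows "ereal (1/2) \<le> hausdorff_dim {x \<in> {0..1}. R x = y}"
  unfolding hausdorff_dim_def
proof (rule Inf_greatest)
  fix z assume "z \<in> {ereal s |s. 0 \<le> s \<and> hausdorff_measure s {x \<in> {0..1}. R x = y} = 0}"
  then obtain s where z: "z = ereal s" "0 \<le> s" "hausdorff_measure s {x \<in> {0..1}. R x = y} = 0" by auto
  have "\<not> s < 1/2" using lower_H[OF y z(2)] z(3) by force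
  then show "ereal (1/2) \<le> z" using z(1) by simp
qed


fun ok :: "(nat \<Rightarrow> bool) \<Rightarrow> bool \<Rightarrow> bool list \<Rightarrow> bool" where
  "ok c p [] = True"
| "ok c p (x # xs) = (if x then c 0 = p \<and> ok (\<lambda>k. c (Suc k)) (\<not> p) xs else ok c (\<not> p) xs)"

fun ff :: "nat \<Rightarrow> nat" where
  "ff 0 = 1" | "ff (Suc 0) = 2" | "ff (Suc (Suc n)) = ff n + ff (Suc n)"

lemma ff_mono_Suc: "ff n \<le> ff (Suc n)"
  by (induction n rule: ff.induct) auto

lemma finite_words: "finite {w :: bool list. length w = n \<and> P w}"
  using finite_lists_length_eq[of "UNIV :: bool set" n] by (rule finite_subset[rotated]) auto

lemma count_ok: "card {w. length w = n \<and> ok c p w} \<le> ff n"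
proof (induction n arbitrary: c p rule: ff.induct)
  case 1
  have "{w :: bool list. length w = 0 \<and> ok c p w} \<subseteq> {[]}" by auto
  from card_mono[OF _ this] show ?case by simp
next
  case 2
  have "{w :: bool list. length w = Suc 0 \<and> ok c p w} \<subseteq> {[True], [False]}"
  proof
    fix w :: "bool list" assume "w \<in> {w. length w = Suc 0 \<and> ok c p w}"
    then obtain a where "w = [a]" by (auto simp: length_Suc_conv)
    then show "w \<in> {[True], [False]}" by (cases a) simp_all
  qed
  from card_mono[OF _ this] have "card {w :: bool list. length w = Suc 0 \<and> ok c p w} \<le> card {[True], [False]}"
    by simp
  then show ?case by simp
next
  case (3 n)
  let ?S = "{w. length w = Suc (Suc n) \<and> ok c p w}"
  let ?Az = "{w. length w = n \<and> ok c p w}"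
  let ?Bz = "{w. length w = Suc n \<and> c 0 = p \<and> ok (\<lambda>k. c (Suc k)) (\<not> p) w}"
  let ?Cz = "{w. length w = n \<and> c 0 = (\<not> p) \<and> ok (\<lambda>k. c (Suc k)) p w}"
  let ?A = "(\<lambda>w. False # False # w) ` ?Az"
  let ?B = "(\<lambda>w. True # w) ` ?Bz"
  let ?C = "(\<lambda>w. False # True # w) ` ?Cz"
  have sub: "?S \<subseteq> ?A \<union> ?B \<union> ?C"
  proof
    fix w assume w: "w \<in> ?S"
    then obtain a v where av: "w = a # v" "length v = Suc n" by (auto simp: length_Suc_conv)
    show "w \<in> ?A \<union> ?B \<union> ?C"
    proof (cases a)
      case True
      then have "v \<in> ?Bz" using w av by simp
      then have "w \<in> ?B" using av True by blast
      then show ?thesis by blast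
    next
      case False
      obtain b u where bu: "v = b # u" "length u = n" using av(2) by (auto simp: length_Suc_conv)
      show ?thesis
      proof (cases b)
        case True
        then have "u \<in> ?Cz" using w av bu False by simp
        then have "w \<in> ?C" using av bu True False by blast
        then show ?thesis by blast
      next
        case b: False
        then have "u \<in> ?Az" using w av bu False by simp
        then have "w \<in> ?A" using av bu b False by blast
        then show ?thesis by blast
      qed
    qed
  qed
  have cA: "card ?A \<le> ff n"
    using card_image_le[OF finite_words, of "\<lambda>w. False # False # w" n "ok c p"] "3.IH"(1)[of c p]
    by linarith
  have cB: "card ?B \<le> (if c 0 = p then ff (Suc n) else 0)"
  proof (cases "c 0 = p")
    case True
    then have e: "?Bz = {w. length w = Suc n \<and> ok (\<lambda>k. c (Suc k)) (\<not> p) w}" by simp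
    have "card ?B \<le> card ?Bz" by (rule card_image_le[OF finite_words])
    also have "\<dots> \<le> ff (Suc n)" unfolding e by (rule "3.IH"(2))
    finally show ?thesis using True by simp
  qed simp
  have cC: "card ?C \<le> (if c 0 = (\<not> p) then ff n else 0)"
  proof (cases "c 0 = (\<not> p)")
    case True
    then have e: "?Cz = {w. length w = n \<and> ok (\<lambda>k. c (Suc k)) p w}" by simp
    have "card ?C \<le> card ?Cz" by (rule card_image_le[OF finite_words])
    also have "\<dots> \<le> ff n" unfolding e by (rule "3.IH"(1))
    finally show ?thesis using True by simp
  qed simp
  have fA: "finite ?A" "finite ?B" "finite ?C" by (intro finite_imageI finite_words)+
  have "card ?S \<le> card (?A \<union> ?B \<union> ?C)" by (rule card_mono[OF _ sub]) (use fA in simp)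
  also have "\<dots> \<le> card (?A \<union> ?B) + card ?C" by (rule card_Un_le)
  also have "card (?A \<union> ?B) \<le> card ?A + card ?B" by (rule card_Un_le)
  finally have "card ?S \<le> card ?A + card ?B + card ?C" by simp
  moreover have "card ?B + card ?C \<le> ff (Suc n)"
  proof (cases "c 0 = p")
    case True then show ?thesis using cB cC by simp
  next
    case False then show ?thesis using cB cC ff_mono_Suc[of n] by simp
  qed
  ultimately show ?case using cA by simp
qed

definition phi :: real where "phi = (1 + sqrt 5) / 2"

lemma phi_sq: "phi^2 = phi + 1"
  unfolding phi_def by (simp add: power2_eq_square field_simps)

lemma phi_ge1: "phi \<ge> 1"
  unfolding phi_def using real_sqrt_ge_one[of 5] by simp

lemma ff_le: "real (ff n) \<le> 2 * phi ^ n"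
proof (induction n rule: ff.induct)
  case 1 then show ?case by simp
next
  case 2 then show ?case using phi_ge1 by simp
next
  case (3 n)
  have "real (ff (Suc (Suc n))) = real (ff n) + real (ff (Suc n))" by simp
  also have "\<dots> \<le> 2 * phi ^ n + 2 * phi ^ Suc n" using 3 by simp
  also have "\<dots> = 2 * phi ^ n * (1 + phi)" by (simp add: algebra_simps)
  also have "\<dots> = 2 * phi ^ n * phi^2" using phi_sq by simp
  also have "\<dots> = 2 * phi ^ Suc (Suc n)" by (simp add: power2_eq_square)
  finally show ?case .
qed


definition cnt :: "(nat \<Rightarrow> nat) \<Rightarrow> nat \<Rightarrow> nat" where
  "cnt b i = card {j. 1 \<le> j \<and> j < i \<and> b j = 1}"

definition word :: "(nat \<Rightarrow> nat) \<Rightarrow> nat \<Rightarrow> bool list" where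
  "word b n = map (\<lambda>j. b j = 1) [1..<Suc n]"

definition vw :: "bool list \<Rightarrow> real" where
  "vw w = (\<Sum>i<length w. (if w ! i then 1 else 0) / 2 ^ Suc i)"

lemma cnt_Suc: "i \<ge> 1 \<Longrightarrow> cnt b (Suc i) = cnt b i + (if b i = 1 then 1 else 0)"
proof -
  assume i: "i \<ge> 1"
  let ?S = "{j. 1 \<le> j \<and> j < i \<and> b j = 1}"
  have f: "finite ?S" by (rule finite_subset[of _ "{..<i}"]) auto
  show ?thesis
  proof (cases "b i = 1")
    case True
    then have "{j. 1 \<le> j \<and> j < Suc i \<and> b j = 1} = insert i ?S" using i by auto
    then show ?thesis unfolding cnt_def using f True by simp
  next
    case False
    then have "{j. 1 \<le> j \<and> j < Suc i \<and> b j = 1} = ?S" using i less_Suc_eq by auto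
    then show ?thesis unfolding cnt_def using False by simp
  qed
qed

lemma word_ok_gen:
  assumes P: "\<And>m. m \<ge> 1 \<Longrightarrow> b m = 1 \<Longrightarrow> (even m \<longleftrightarrow> cc (cnt b m + 1) = 1)"
  shows "i \<ge> 1 \<Longrightarrow> ok (\<lambda>k. cc (cnt b i + k + 1) = 1) (even i) (map (\<lambda>j. b j = 1) [i..<i+n])"
proof (induction n arbitrary: i)
  case 0 then show ?case by simp
next
  case (Suc n)
  have u: "[i..<i + Suc n] = i # [Suc i..<Suc i + n]" by (simp add: upt_conv_Cons)
  have IH: "ok (\<lambda>k. cc (cnt b (Suc i) + k + 1) = 1) (even (Suc i)) (map (\<lambda>j. b j = 1) [Suc i..<Suc i+n])"
    using Suc.IH[of "Suc i"] by simp
  show ?case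
  proof (cases "b i = 1")
    case True
    have "cnt b (Suc i) = cnt b i + 1" using cnt_Suc[OF Suc.prems] True by simp
    then have IH': "ok (\<lambda>k. cc (cnt b i + Suc k + 1) = 1) (\<not> even i) (map (\<lambda>j. b j = 1) [Suc i..<Suc i+n])"
      using IH by simp
    have "(cc (cnt b i + 0 + 1) = 1) = even i" using P[OF Suc.prems True] by simp
    then show ?thesis unfolding u using True IH' by simp
  next
    case False
    have "cnt b (Suc i) = cnt b i" using cnt_Suc[OF Suc.prems] False by simp
    then show ?thesis unfolding u using False IH by simp
  qed
qed

lemma word_ok:
  assumes P: "\<And>m. m \<ge> 1 \<Longrightarrow> b m = 1 \<Longrightarrow> (even m \<longleftrightarrow> cc (cnt b m + 1) = 1)"
  shows "ok (\<lambda>k. cc (Suc k) = 1) False (word b n)"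
proof -
  have "cnt b 1 = 0" unfolding cnt_def by simp
  then show ?thesis using word_ok_gen[OF P, of 1 n] unfolding word_def by simp
qed

lemma rho_prop:
  assumes b: "betaP b x" and m: "m \<ge> 1" "b m = 1"
  shows "even m \<longleftrightarrow> rho b (cnt b m + 1) = 1"
proof -
  let ?A = "{n. 1 \<le> n \<and> b n = 1}"
  have b0: "b 0 = 0" and inf: "infinite {n. b n = 1}" using b unfolding betaP_alt by blast+
  have "b n = 1 \<Longrightarrow> 1 \<le> n" for n using b0 by (cases n) auto
  then have "{n. b n = 1} = ?A" by blast
  then have infA: "infinite ?A" using inf by simp
  have mA: "m \<in> ?A" using m by simp
  have cardeq: "card {a\<in>?A. a < m} = cnt b m" unfolding cnt_def
    by (rule arg_cong[where f=card]) blast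
  have e: "enumerate ?A (cnt b m) = m" using enumerate_card[OF infA mA] unfolding cardeq .
  have "rho b (cnt b m + 1) = (if even m then 1 else 0)" unfolding rho_def add_diff_cancel_right' e by simp
  then show ?thesis by simp
qed

lemma bin01_real: "bin01 b \<Longrightarrow> real (b n) = (if b n = 1 then 1 else 0)"
  using bin01_cases[of b n] by auto

lemma vw_word: "bin01 b \<Longrightarrow> sum (dterm b) {..<n} = vw (word b n)"
proof -
  assume b: "bin01 b"
  have "vw (word b n) = (\<Sum>i<n. (if b (Suc i) = 1 then 1 else 0) / 2 ^ Suc i)"
    unfolding vw_def word_def by (intro sum.cong) (auto simp del: upt_Suc simp add: nth_upt)
  also have "\<dots> = sum (dterm b) {..<n}"
    unfolding dterm_def using bin01_real[OF b] by (intro sum.cong refl) simp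
  finally show ?thesis by simp
qed

lemma two_c:
  "\<exists>c1 c2. \<forall>c. bin01 c \<and> c 0 = 0 \<and> suminf (dterm c) = y \<longrightarrow> c = c1 \<or> c = c2"
proof -
  let ?P = "\<lambda>c. bin01 c \<and> c 0 = 0 \<and> suminf (dterm c) = y"
  define c1 where "c1 = (SOME c. ?P c \<and> infinite {n. c n = 1})"
  define c2 where "c2 = (SOME c. ?P c \<and> finite {n. c n = 1})"
  have "c = c1 \<or> c = c2" if c: "?P c" for c
  proof (cases "finite {n. c n = 1}")
    case True
    have ex: "\<exists>c. ?P c \<and> finite {n. c n = 1}" using c True by blast
    have "?P c2 \<and> finite {n. c2 n = 1}" unfolding c2_def by (rule someI_ex[OF ex])
    then have "c = c2"
    proof -
      assume h: "?P c2 \<and> finite {n. c2 n = 1}"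
      show "c = c2"
      proof (rule ccontr)
        assume ne: "c \<noteq> c2"
        have "\<exists>k. (finite {n. c n = 1} \<and> infinite {n. c2 n = 1}) \<or> (infinite {n. c n = 1} \<and> finite {n. c2 n = 1})"
          by (rule two_expansions) (use c h ne in simp_all)
        then show False using h True by auto
      qed
    qed
    then show ?thesis by simp
  next
    case False
    have ex: "\<exists>c. ?P c \<and> infinite {n. c n = 1}" using c False by blast
    have "?P c1 \<and> infinite {n. c1 n = 1}" unfolding c1_def by (rule someI_ex[OF ex])
    then have "c = c1"
    proof -
      assume h: "?P c1 \<and> infinite {n. c1 n = 1}"
      show "c = c1"
      proof (rule ccontr)
        assume ne: "c \<noteq> c1"
        have "\<exists>k. (finite {n. c n = 1} \<and> infinite {n. c1 n = 1}) \<or> (infinite {n. c n = 1} \<and> finite {n. c1 n = 1})"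
          by (rule two_expansions) (use c h ne in simp_all)
        then show False using h False by auto
      qed
    qed
    then show ?thesis by simp
  qed
  then show ?thesis by blast
qed


lemma pow_powr: "(x::real) > 0 \<Longrightarrow> (x ^ n) powr s = (x powr s) ^ n"
proof -
  assume x: "x > 0"
  have "(x ^ n) powr s = (x powr real n) powr s" using x by (simp add: powr_realpow)
  also have "\<dots> = x powr (s * real n)" by (simp add: powr_powr mult.commute)
  also have "\<dots> = (x powr s) powr real n" by (simp add: powr_powr)
  also have "\<dots> = (x powr s) ^ n" using x by (simp add: powr_realpow)
  finally show ?thesis .
qed

lemma fiber_word:
  assumes x: "x \<in> {0..1}" "R x = y" "x \<noteq> 0"
    and c12: "\<forall>c. bin01 c \<and> c 0 = 0 \<and> suminf (dterm c) = y \<longrightarrow> c = c1 \<or> c = c2"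
  shows "word (beta x) n \<in> {w. length w = n \<and> (ok (\<lambda>k. c1 (Suc k) = 1) False w \<or> ok (\<lambda>k. c2 (Suc k) = 1) False w)}
    \<and> vw (word (beta x) n) \<le> x \<and> x \<le> vw (word (beta x) n) + (1/2)^n"
proof -
  have x01: "0 < x" "x \<le> 1" using x by auto
  define b where "b = beta x"
  have b: "betaP b x" unfolding b_def by (rule beta_prop[OF x01])
  have bb: "bin01 b" "suminf (dterm b) = x" using b unfolding betaP_alt by blast+
  define cc where "cc = rho b"
  have ccb: "bin01 cc" unfolding cc_def bin01_def rho_def by auto
  have cc0: "cc 0 = 0" unfolding cc_def rho_def by simp
  have "R x = (\<Sum>k. real (rho b (Suc k)) / 2 ^ Suc k)" unfolding R_def b_def using x(3) by simp
  then have ccy: "suminf (dterm cc) = y" using x(2) unfolding cc_def dterm_fun by simp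
  have cases: "cc = c1 \<or> cc = c2" using c12 ccb cc0 ccy by blast
  have P: "\<And>m. m \<ge> 1 \<Longrightarrow> b m = 1 \<Longrightarrow> (even m \<longleftrightarrow> cc (cnt b m + 1) = 1)"
    unfolding cc_def by (rule rho_prop[OF b])
  have okw: "ok (\<lambda>k. cc (Suc k) = 1) False (word b n)" by (rule word_ok[OF P])
  have len: "length (word b n) = n" unfolding word_def by simp
  have "x = sum (dterm b) {..<n} + dtail b n" using dval_split[OF bb(1), of n] bb(2) by simp
  then have "x = vw (word b n) + dtail b n" using vw_word[OF bb(1)] by simp
  then show ?thesis using okw cases len dtail_nonneg[OF bb(1), of n] dtail_le[OF bb(1), of n]
    unfolding b_def by auto
qed

lemma upper_pre:
  assumes y: "y \<in> {0..1::real}" and s: "log 2 phi < s" and d: "\<delta> > 0" and e: "e > 0"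
  shows "hausdorff_pre s \<delta> {x \<in> {0..1}. R x = y} \<le> ennreal e"
proof -
  let ?F = "{x \<in> {0..1}. R x = y}"
  obtain c1 c2 where c12: "\<forall>c. bin01 c \<and> c 0 = 0 \<and> suminf (dterm c) = y \<longrightarrow> c = c1 \<or> c = c2"
    using two_c by blast
  have phi0: "phi > 0" using phi_ge1 by simp
  have s0: "s > 0"
  proof -
    have "log 2 phi \<ge> 0" using phi_ge1 by simp
    then show ?thesis using s by linarith
  qed
  define r where "r = phi / 2 powr s"
  have r0: "0 \<le> r" unfolding r_def using phi0 by simp
  have r1: "r < 1"
  proof -
    have "phi = 2 powr (log 2 phi)" using phi0 by simp
    also have "\<dots> < 2 powr s" by (rule powr_less_mono[OF s]) simp
    finally show ?thesis unfolding r_def by simp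
  qed
  have ev1: "eventually (\<lambda>n. r ^ n < e / 4) sequentially"
    by (rule order_tendstoD(2)[OF LIMSEQ_power_zero]) (use r0 r1 e in auto)
  have ev2: "eventually (\<lambda>n. (1/2::real) ^ n < \<delta>) sequentially"
    by (rule order_tendstoD(2)[OF LIMSEQ_power_zero]) (use d in auto)
  obtain n where n1: "r ^ n < e / 4" and n2: "(1/2::real) ^ n < \<delta>"
    using eventually_conj[OF ev1 ev2] eventually_sequentially by auto
  define WS where "WS = {w. length w = n \<and> (ok (\<lambda>k. c1 (Suc k) = 1) False w \<or> ok (\<lambda>k. c2 (Suc k) = 1) False w)}"
  have finWS: "finite WS" unfolding WS_def by (rule finite_words)
  have cardWS: "card WS \<le> 2 * ff n"
  proof -
    have "WS = {w. length w = n \<and> ok (\<lambda>k. c1 (Suc k) = 1) False w} \<union> {w. length w = n \<and> ok (\<lambda>k. c2 (Suc k) = 1) False w}"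
      unfolding WS_def by auto
    then have "card WS \<le> card {w. length w = n \<and> ok (\<lambda>k. c1 (Suc k) = 1) False w} + card {w. length w = n \<and> ok (\<lambda>k. c2 (Suc k) = 1) False w}"
      using card_Un_le by metis
    then show ?thesis using count_ok[of n "\<lambda>k. c1 (Suc k) = 1" False] count_ok[of n "\<lambda>k. c2 (Suc k) = 1" False] by linarith
  qed
  define N where "N = card WS"
  obtain h where h: "bij_betw h {0..<N} WS" unfolding N_def using ex_bij_betw_nat_finite[OF finWS] by blast
  define q where "q = (1/2::real) ^ n"
  have q0: "q > 0" unfolding q_def by simp
  define U where "U i = (if i < N then {vw (h i) .. vw (h i) + q} else {0})" for i
  have cov: "?F \<subseteq> (\<Union>i. U i)"
  proof
    fix x assume xF: "x \<in> ?F"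
    show "x \<in> (\<Union>i. U i)"
    proof (cases "x = 0")
      case True
      then have "x \<in> U N" unfolding U_def by simp
      then show ?thesis by blast
    next
      case False
      have fw: "word (beta x) n \<in> WS \<and> vw (word (beta x) n) \<le> x \<and> x \<le> vw (word (beta x) n) + q"
        using fiber_word[of x y c1 c2 n] xF False c12 unfolding WS_def q_def by auto
      then obtain i where i: "i \<in> {0..<N}" "h i = word (beta x) n"
        using h unfolding bij_betw_def by (metis imageE)
      then have "x \<in> U i" using fw unfolding U_def by auto
      then show ?thesis by blast
    qed
  qed
  have Ub: "bounded (U i)" for i unfolding U_def by auto
  have Ud: "diameter (U i) \<le> q" for i
  proof (cases "i < N")
    case True
    have "diameter {vw (h i) .. vw (h i) + q} \<le> q"
      by (rule diameter_le) (use q0 in \<open>auto simp: abs_if\<close>)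
    then show ?thesis unfolding U_def using True by simp
  next
    case False then show ?thesis unfolding U_def using q0 by simp
  qed
  have Uin: "U \<in> {U :: nat \<Rightarrow> real set. ?F \<subseteq> (\<Union>i. U i) \<and> (\<forall>i. bounded (U i) \<and> diameter (U i) \<le> \<delta>)}"
  proof -
    have "diameter (U i) \<le> \<delta>" for i using Ud[of i] n2 unfolding q_def by linarith
    then show ?thesis using cov Ub by auto
  qed
  have "hausdorff_pre s \<delta> ?F \<le> (\<Sum>i. ennreal (diameter (U i) powr s))"
    unfolding hausdorff_pre_def by (rule INF_lower[OF Uin])
  also have "\<dots> = (\<Sum>i<N. ennreal (diameter (U i) powr s))"
    by (rule suminf_finite) (auto simp: U_def)
  also have "\<dots> \<le> (\<Sum>i<N. ennreal (q powr s))"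
  proof (rule sum_mono)
    fix i
    have "diameter (U i) powr s \<le> q powr s"
      by (rule powr_mono2) (use s0 Ud[of i] diameter_ge_0[OF Ub[of i]] in auto)
    then show "ennreal (diameter (U i) powr s) \<le> ennreal (q powr s)" by (rule ennreal_leI)
  qed
  also have "\<dots> = ennreal (real N * q powr s)" by (simp add: ennreal_of_nat_eq_real_of_nat ennreal_mult)
  also have "real N * q powr s \<le> e"
  proof -
    have "q powr s = (1 / 2 powr s) ^ n" unfolding q_def by (simp add: pow_powr powr_divide)
    have "real N * q powr s \<le> (2 * (2 * phi ^ n)) * q powr s"
    proof (rule mult_right_mono)
      have "real N \<le> 2 * real (ff n)" using cardWS unfolding N_def by linarith
      then show "real N \<le> 2 * (2 * phi ^ n)" using ff_le[of n] by linarith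
    qed simp
    also have "\<dots> = 4 * (phi ^ n * (1 / 2 powr s) ^ n)"
      using \<open>q powr s = (1 / 2 powr s) ^ n\<close> by simp
    also have "\<dots> = 4 * r ^ n" unfolding r_def by (simp add: power_mult_distrib[symmetric])
    also have "\<dots> \<le> e" using n1 by simp
    finally show ?thesis .
  qed
  then have "ennreal (real N * q powr s) \<le> ennreal e" by (rule ennreal_leI)
  finally show ?thesis .
qed


lemma upper_H:
  assumes y: "y \<in> {0..1::real}" and s: "log 2 phi < s"
  shows "hausdorff_measure s {x \<in> {0..1}. R x = y} = 0"
proof -
  have "hausdorff_pre s \<delta> {x \<in> {0..1}. R x = y} = 0" if d: "\<delta> > 0" for \<delta>
  proof -
    have "hausdorff_pre s \<delta> {x \<in> {0..1}. R x = y} \<le> 0"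
    proof (rule ennreal_le_epsilon)
      fix e :: real assume "0 < e"
      then show "hausdorff_pre s \<delta> {x \<in> {0..1}. R x = y} \<le> 0 + ennreal e"
        using upper_pre[OF y s d] by simp
    qed
    then show ?thesis by simp
  qed
  then show ?thesis unfolding hausdorff_measure_def by simp
qed

lemma dim_upper:
  assumes y: "y \<in> {0..1::real}"
  shows "hausdorff_dim {x \<in> {0..1}. R x = y} \<le> ereal (log 2 ((1 + sqrt 5) / 2))"
proof -
  have L0: "log 2 phi \<ge> 0" using phi_ge1 by simp
  have "hausdorff_dim {x \<in> {0..1}. R x = y} \<le> ereal (log 2 phi) + ereal e" if e: "e > 0" for e
  proof -
    have "ereal (log 2 phi + e) \<in> {ereal s |s. 0 \<le> s \<and> hausdorff_measure s {x \<in> {0..1}. R x = y} = 0}"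
      using upper_H[OF y, of "log 2 phi + e"] e L0 by auto
    then have "hausdorff_dim {x \<in> {0..1}. R x = y} \<le> ereal (log 2 phi + e)"
      unfolding hausdorff_dim_def by (rule Inf_lower)
    then show ?thesis by simp
  qed
  then have "hausdorff_dim {x \<in> {0..1}. R x = y} \<le> ereal (log 2 phi)"
    by (rule ereal_le_epsilon2)
  then show ?thesis unfolding phi_def .
qed

theorem proposition5p8:
  fixes y :: real
  assumes "y \<in> {0..1}"
  shows "ereal (1/2) \<le> hausdorff_dim {x \<in> {0..1}. R x = y}
       \<and> hausdorff_dim {x \<in> {0..1}. R x = y} \<le> ereal (log 2 ((1 + sqrt 5) / 2))"
  using dim_lower[OF assms] dim_upper[OF assms] by blast


end
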